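(* Let $q$ be a prime power and $F/\mathbb{F}_q$ an algebraic function field with full constant field $\mathbb{F}_q$ of genus $g\geq 2$. For $n\geq 0$ let $A_n$ be the number of effective divisors of degree $n$ of $F$, for $r\geq1$ let $B_r$ be the number of places of degree $r$ of $F$, let $\Sigma_2=q^{g-1}\sum_{n=0}^{g-2}A_n/q^n$ and $\Delta_2=\{r:1\leq r\leq g-2,\ B_r\geq 1\}$. Then $$\Sigma_2\leq q^{g-1}\prod_{r\in\Delta_2}\left[\sum_{b=0}^{\lfloor\frac{g-2}{r}\rfloor}\frac{1}{q^{rb}}\binom{B_r+b-1}{b}\right].$$ *)

theory Defs
  imports Complex_Main "HOL-Computational_Algebra.Polynomial"
begin

text \<open>Algebraic function fields F/K: the field F is the whole type 'a, and K is a subfield of it.\<close>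

definition subfield :: "'a::field set \<Rightarrow> bool" where
  "subfield K \<longleftrightarrow> 0 \<in> K \<and> 1 \<in> K \<and> (\<forall>x\<in>K. \<forall>y\<in>K. x + y \<in> K \<and> x * y \<in> K)
     \<and> (\<forall>x\<in>K. - x \<in> K \<and> inverse x \<in> K)"

definition algebraic_over :: "'a::field set \<Rightarrow> 'a \<Rightarrow> bool" where
  "algebraic_over K x \<longleftrightarrow> (\<exists>p. p \<noteq> 0 \<and> (\<forall>i. coeff p i \<in> K) \<and> poly p x = 0)"

definition adjoin :: "'a::field set \<Rightarrow> 'a \<Rightarrow> 'a set" where
  "adjoin K x = {poly p x / poly r x | p r. (\<forall>i. coeff p i \<in> K) \<and> (\<forall>i. coeff r i \<in> K) \<and> poly r x \<noteq> 0}"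

definition finite_over :: "'a::field set \<Rightarrow> bool" where
  "finite_over L \<longleftrightarrow> (\<exists>(n::nat) e. \<forall>y. \<exists>c. (\<forall>i<n. c i \<in> L) \<and> y = (\<Sum>i<n. c i * e i))"

definition function_field :: "'a::field set \<Rightarrow> bool" where
  "function_field K \<longleftrightarrow> subfield K \<and> (\<exists>x. \<not> algebraic_over K x \<and> finite_over (adjoin K x))"

definition full_constant_field :: "'a::field set \<Rightarrow> bool" where
  "full_constant_field K \<longleftrightarrow> (\<forall>z. algebraic_over K z \<longrightarrow> z \<in> K)"

definition subring :: "'a::field set \<Rightarrow> bool" where
  "subring R \<longleftrightarrow> 0 \<in> R \<and> 1 \<in> R \<and> (\<forall>x\<in>R. \<forall>y\<in>R. x + y \<in> R \<and> x * y \<in> R) \<and> (\<forall>x\<in>R. - x \<in> R)"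

definition valuation_ring :: "'a::field set \<Rightarrow> 'a set \<Rightarrow> bool" where
  "valuation_ring K R \<longleftrightarrow> subring R \<and> K \<subset> R \<and> R \<noteq> UNIV \<and> (\<forall>z. z \<in> R \<or> inverse z \<in> R)"

definition nonunits :: "'a::field set \<Rightarrow> 'a set" where
  "nonunits R = {z \<in> R. z = 0 \<or> inverse z \<notin> R}"

definition place :: "'a::field set \<Rightarrow> 'a set \<Rightarrow> bool" where
  "place K P \<longleftrightarrow> (\<exists>R. valuation_ring K R \<and> P = nonunits R)"

definition ring_of :: "'a::field set \<Rightarrow> 'a set \<Rightarrow> 'a set" where
  "ring_of K P = (THE R. valuation_ring K R \<and> P = nonunits R)"

text \<open>Normalized discrete valuation v_P (for z \<noteq> 0): z = t^n u with t a prime element, u a unit.\<close>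
definition prime_elem :: "'a::field set \<Rightarrow> 'a set \<Rightarrow> 'a" where
  "prime_elem K P = (SOME t. t \<in> P \<and> P = (\<lambda>w. t * w) ` ring_of K P)"

definition val :: "'a::field set \<Rightarrow> 'a set \<Rightarrow> 'a \<Rightarrow> int" where
  "val K P z = (THE n. \<exists>u. u \<in> ring_of K P \<and> inverse u \<in> ring_of K P \<and> z = prime_elem K P powi n * u)"

text \<open>Degree of a place: dimension of the residue class field O_P/P over K.\<close>
definition place_deg :: "'a::field set \<Rightarrow> 'a set \<Rightarrow> nat" where
  "place_deg K P = (LEAST n. \<exists>e. (\<forall>i<n. e i \<in> ring_of K P) \<and>
      (\<forall>z\<in>ring_of K P. \<exists>c. (\<forall>i<n. c i \<in> K) \<and> z - (\<Sum>i<n. c i * e i) \<in> P))"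

definition divisor :: "'a::field set \<Rightarrow> ('a set \<Rightarrow> int) \<Rightarrow> bool" where
  "divisor K D \<longleftrightarrow> finite {P. D P \<noteq> 0} \<and> (\<forall>P. D P \<noteq> 0 \<longrightarrow> place K P)"

definition effective :: "('a set \<Rightarrow> int) \<Rightarrow> bool" where
  "effective D \<longleftrightarrow> (\<forall>P. D P \<ge> 0)"

definition div_deg :: "'a::field set \<Rightarrow> ('a set \<Rightarrow> int) \<Rightarrow> int" where
  "div_deg K D = (\<Sum>P\<in>{P. D P \<noteq> 0}. D P * int (place_deg K P))"

definition RR_space :: "'a::field set \<Rightarrow> ('a set \<Rightarrow> int) \<Rightarrow> 'a set" where
  "RR_space K A = {x. x = 0 \<or> (\<forall>P. place K P \<longrightarrow> val K P x \<ge> - A P)}"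

definition ell :: "'a::field set \<Rightarrow> ('a set \<Rightarrow> int) \<Rightarrow> nat" where
  "ell K A = (LEAST n. \<exists>e. (\<forall>i<n. e i \<in> RR_space K A) \<and>
      (\<forall>x\<in>RR_space K A. \<exists>c. (\<forall>i<n. c i \<in> K) \<and> x = (\<Sum>i<n. c i * e i)))"

definition genus :: "'a::field set \<Rightarrow> int" where
  "genus K = Sup {div_deg K A - int (ell K A) + 1 | A. divisor K A}"

definition num_eff_divs :: "'a::field set \<Rightarrow> nat \<Rightarrow> nat" where
  "num_eff_divs K n = card {D. divisor K D \<and> effective D \<and> div_deg K D = int n}"

definition num_places :: "'a::field set \<Rightarrow> nat \<Rightarrow> nat" where
  "num_places K r = card {P. place K P \<and> place_deg K P = r}"

end

theory Submission
  imports Defs "HOL-Library.Multiset" "HOL-Library.FuncSet"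
begin

definition dgs :: "('p \<Rightarrow> nat) \<Rightarrow> ('p \<Rightarrow> int) \<Rightarrow> int" where
  "dgs dg D = (\<Sum>P\<in>{P. D P \<noteq> 0}. D P * int (dg P))"

definition Sd :: "('p \<Rightarrow> bool) \<Rightarrow> ('p \<Rightarrow> nat) \<Rightarrow> nat \<Rightarrow> ('p \<Rightarrow> int) set" where
  "Sd pl dg n = {D. finite {P. D P \<noteq> 0} \<and> (\<forall>P. D P \<noteq> 0 \<longrightarrow> pl P) \<and> (\<forall>P. 0 \<le> D P) \<and> dgs dg D = int n}"

definition Cl :: "('p \<Rightarrow> bool) \<Rightarrow> ('p \<Rightarrow> nat) \<Rightarrow> nat \<Rightarrow> 'p set" where
  "Cl pl dg r = {P. pl P \<and> dg P = r}"

lemma dgs_superset: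
  assumes "finite F" "{P. D P \<noteq> 0} \<subseteq> F"
  shows "dgs dg D = (\<Sum>P\<in>F. D P * int (dg P))"
  unfolding dgs_def using assms by (intro sum.mono_neutral_left) auto

lemma good:
  assumes D: "D \<in> Sd pl dg n" and fin: "finite (Sd pl dg n)" and P: "D P \<noteq> 0"
  shows "pl P \<and> 1 \<le> dg P \<and> finite (Cl pl dg (dg P)) \<and> dg P \<le> n"
proof -
  have fs: "finite {P. D P \<noteq> 0}" and plD: "\<And>P. D P \<noteq> 0 \<Longrightarrow> pl P"
    and nn: "\<And>P. 0 \<le> D P" and dD: "dgs dg D = int n" using D by (auto simp: Sd_def)
  have pos: "D P \<ge> 1" using nn[of P] P by linarith
  have "D P * int (dg P) \<le> dgs dg D"
    unfolding dgs_def using fs P nn by (intro member_le_sum) auto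
  moreover have "int (dg P) \<le> D P * int (dg P)" using pos by (simp add: mult_le_cancel_right1)
  ultimately have le: "dg P \<le> n" using dD by linarith
  have d1: "1 \<le> dg P"
  proof (rule ccontr)
    assume "\<not> 1 \<le> dg P" hence d0: "dg P = 0" by simp
    define f where "f = (\<lambda>k::nat. D(P := D P + int k))"
    have "f ` UNIV \<subseteq> Sd pl dg n"
    proof
      fix E assume "E \<in> f ` UNIV"
      then obtain k where E: "E = f k" by auto
      have supp: "{Q. E Q \<noteq> 0} = {Q. D Q \<noteq> 0}" using pos by (auto simp: E f_def)
      have "dgs dg E = dgs dg D" unfolding dgs_def supp
        by (intro sum.cong) (auto simp: E f_def d0)
      thus "E \<in> Sd pl dg n" using fs plD nn dD supp pos
        by (auto simp: Sd_def E f_def)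
    qed
    moreover have "inj f" by (auto simp: inj_def f_def dest: fun_cong[of _ _ P])
    ultimately show False using fin finite_subset[of "f ` UNIV"] finite_imageD by blast
  qed
  have fc: "finite (Cl pl dg (dg P))"
  proof (rule ccontr)
    assume inf: "infinite (Cl pl dg (dg P))"
    define f where "f = (\<lambda>Q. (D(P := D P - 1))(Q := D Q + 1))"
    define A where "A = Cl pl dg (dg P) - {P}"
    have infA: "infinite A" using inf by (simp add: A_def)
    have "f ` A \<subseteq> Sd pl dg n"
    proof
      fix E assume "E \<in> f ` A"
      then obtain Q where Q: "Q \<in> A" and E: "E = f Q" by auto
      have QP: "Q \<noteq> P" "pl Q" "dg Q = dg P" using Q by (auto simp: A_def Cl_def)
      define F where "F = insert Q {P. D P \<noteq> 0}"
      have fF: "finite F" using fs by (simp add: F_def)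
      have sub: "{R. E R \<noteq> 0} \<subseteq> F" using P by (auto simp: E f_def F_def)
      have "dgs dg E = (\<Sum>R\<in>F. E R * int (dg R))" by (rule dgs_superset[OF fF sub])
      also have "\<dots> = (\<Sum>R\<in>F. D R * int (dg R) + (if R = Q then int (dg Q) else 0)
                     - (if R = P then int (dg P) else 0))"
        by (intro sum.cong) (auto simp: E f_def QP algebra_simps)
      also have "\<dots> = (\<Sum>R\<in>F. D R * int (dg R))"
        using fF P by (simp add: sum.distrib sum_subtractf F_def QP)
      also have "\<dots> = dgs dg D" by (rule dgs_superset[symmetric, OF fF]) (auto simp: F_def)
      finally have "dgs dg E = int n" using dD by simp
      moreover have "finite {R. E R \<noteq> 0}" using sub fF finite_subset by blast
      moreover have "\<forall>R. E R \<noteq> 0 \<longrightarrow> pl R" using plD QP P by (auto simp: E f_def)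
      moreover have "\<forall>R. 0 \<le> E R" using nn pos by (auto simp: E f_def)
      ultimately show "E \<in> Sd pl dg n" by (simp add: Sd_def)
    qed
    moreover have "inj_on f A"
    proof (rule inj_onI)
      fix Q1 Q2 assume "Q1 \<in> A" "Q2 \<in> A" "f Q1 = f Q2"
      hence "f Q1 Q1 = f Q2 Q1" "Q1 \<noteq> P" by (auto simp: A_def)
      thus "Q1 = Q2" by (auto simp: f_def split: if_splits)
    qed
    ultimately show False using fin infA finite_subset[of "f ` A"] finite_imageD by blast
  qed
  show ?thesis using plD[OF P] d1 fc le by blast
qed

lemma finite_msets_le:
  assumes "finite A"
  shows "{M. set_mset M \<subseteq> A \<and> size M \<le> k} = (\<Union>b\<in>{0..k}. multisets_of_size A b)"
    and "finite {M. set_mset M \<subseteq> A \<and> size M \<le> k}"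
proof -
  show e: "{M. set_mset M \<subseteq> A \<and> size M \<le> k} = (\<Union>b\<in>{0..k}. multisets_of_size A b)"
    by (auto simp: multisets_of_size_def)
  show "finite {M. set_mset M \<subseteq> A \<and> size M \<le> k}"
    unfolding e using assms by (auto intro: finite_multisets_of_size)
qed

lemma factor_eq:
  fixes x :: real
  assumes "finite A"
  shows "(\<Sum>M\<in>{M. set_mset M \<subseteq> A \<and> size M \<le> k}. x ^ (r * size M))
     = (\<Sum>b=0..k. x ^ (r * b) * real ((card A + b - 1) choose b))"
proof -
  have "(\<Sum>M\<in>{M. set_mset M \<subseteq> A \<and> size M \<le> k}. x ^ (r * size M))
      = (\<Sum>b\<in>{0..k}. \<Sum>M\<in>multisets_of_size A b. x ^ (r * size M))"
    unfolding finite_msets_le(1)[OF assms]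
    using finite_multisets_of_size[OF assms] by (intro sum.UNION_disjoint) (auto simp: multisets_of_size_def)
  also have "\<dots> = (\<Sum>b=0..k. x ^ (r * b) * real ((card A + b - 1) choose b))"
    by (intro sum.cong refl)
       (simp add: multisets_of_size_def[symmetric] card_multisets_of_size[OF assms]
          cong: sum.cong add: multisets_of_size_size)
  finally show ?thesis .
qed

lemma main_ineq:
  fixes x :: real and N :: nat
  assumes x0: "0 \<le> x"
  shows "(\<Sum>n=0..N. real (card (Sd pl dg n)) * x ^ n)
    \<le> (\<Prod>r\<in>{r. 1 \<le> r \<and> r \<le> N \<and> card (Cl pl dg r) \<ge> 1}.
          (\<Sum>b=0..N div r. x ^ (r * b) * real ((card (Cl pl dg r) + b - 1) choose b)))"
proof -
  define R where "R = {r. 1 \<le> r \<and> r \<le> N \<and> card (Cl pl dg r) \<ge> 1}"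
  have finR: "finite R" unfolding R_def by (rule finite_subset[of _ "{..N}"]) auto
  have finC: "\<And>r. r \<in> R \<Longrightarrow> finite (Cl pl dg r)"
    unfolding R_def using card.infinite by fastforce
  define T where "T n = (if finite (Sd pl dg n) then Sd pl dg n else {})" for n
  define U where "U = (\<Union>n\<in>{0..N}. T n)"
  have finT: "\<And>n. finite (T n)" by (simp add: T_def)
  have finU: "finite U" unfolding U_def using finT by auto
  have TU: "\<And>D. D \<in> U \<Longrightarrow> \<exists>n\<le>N. D \<in> Sd pl dg n \<and> finite (Sd pl dg n)"
    unfolding U_def T_def by (auto split: if_splits)
  define V where "V = (\<Union>r\<in>R. Cl pl dg r)"
  have finV: "finite V" unfolding V_def using finR finC by auto
  have goodU: "\<And>D P. D \<in> U \<Longrightarrow> D P \<noteq> 0 \<Longrightarrow> dg P \<in> R \<and> P \<in> Cl pl dg (dg P)"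
  proof -
    fix D P assume "D \<in> U" "D P \<noteq> 0"
    then obtain n where n: "n \<le> N" "D \<in> Sd pl dg n" "finite (Sd pl dg n)" using TU by blast
    have g: "pl P \<and> 1 \<le> dg P \<and> finite (Cl pl dg (dg P)) \<and> dg P \<le> n"
      by (rule good[OF n(2,3) \<open>D P \<noteq> 0\<close>])
    hence "P \<in> Cl pl dg (dg P)" by (simp add: Cl_def)
    hence "card (Cl pl dg (dg P)) \<ge> 1" using g by (metis card_0_eq empty_iff less_one not_le)
    thus "dg P \<in> R \<and> P \<in> Cl pl dg (dg P)" using g n \<open>P \<in> _\<close> by (auto simp: R_def)
  qed
  have nnU: "\<And>D P. D \<in> U \<Longrightarrow> 0 \<le> D P" using TU by (auto simp: Sd_def)
  have fsU: "\<And>D. D \<in> U \<Longrightarrow> finite {P. D P \<noteq> 0}" using TU by (auto simp: Sd_def)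
  have suppV: "\<And>D. D \<in> U \<Longrightarrow> {P. D P \<noteq> 0} \<subseteq> V"
    using goodU unfolding V_def by blast
  define ms where "ms D r = (\<Sum>P\<in>Cl pl dg r. replicate_mset (nat (D P)) P)" for D r
  define psi where "psi D = restrict (ms D) R" for D
  define Dom where "Dom = PiE R (\<lambda>r. {M. set_mset M \<subseteq> Cl pl dg r \<and> size M \<le> N div r})"
  define w where "w M = (\<Prod>r\<in>R. x ^ (r * size (M r)))" for M :: "nat \<Rightarrow> 'a multiset"
  have size_ms: "\<And>D r. r \<in> R \<Longrightarrow> size (ms D r) = (\<Sum>P\<in>Cl pl dg r. nat (D P))"
    by (simp add: ms_def)
  have csum: "\<And>D r. D \<in> U \<Longrightarrow> r \<in> R \<Longrightarrow>
      (\<Sum>P\<in>Cl pl dg r. D P * int (dg P)) = int r * int (size (ms D r))"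
  proof -
    fix D r assume D: "D \<in> U" and r: "r \<in> R"
    have "(\<Sum>P\<in>Cl pl dg r. D P * int (dg P)) = (\<Sum>P\<in>Cl pl dg r. int r * int (nat (D P)))"
      using nnU[OF D] by (intro sum.cong) (auto simp: Cl_def)
    thus "?thesis D r" by (simp add: size_ms[OF r] sum_distrib_left)
  qed
  have degU: "\<And>D. D \<in> U \<Longrightarrow> dgs dg D = (\<Sum>r\<in>R. int r * int (size (ms D r)))"
  proof -
    fix D assume D: "D \<in> U"
    have "dgs dg D = (\<Sum>P\<in>V. D P * int (dg P))" by (rule dgs_superset[OF finV suppV[OF D]])
    also have "\<dots> = (\<Sum>r\<in>R. \<Sum>P\<in>Cl pl dg r. D P * int (dg P))"
      unfolding V_def using finR finC by (intro sum.UNION_disjoint) (auto simp: Cl_def)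
    also have "\<dots> = (\<Sum>r\<in>R. int r * int (size (ms D r)))"
      using csum[OF D] by simp
    finally show "?thesis D" .
  qed
  have psiDom: "\<And>D. D \<in> U \<Longrightarrow> psi D \<in> Dom"
  proof -
    fix D assume D: "D \<in> U"
    then obtain n where n: "n \<le> N" "D \<in> Sd pl dg n" using TU by blast
    have "dgs dg D = int n" using n by (simp add: Sd_def)
    { fix r assume r: "r \<in> R"
      have s1: "set_mset (ms D r) \<subseteq> Cl pl dg r"
        unfolding ms_def using finC[OF r] by (auto simp: set_mset_sum split: if_splits)
      have "(\<Sum>P\<in>Cl pl dg r. D P * int (dg P)) \<le> (\<Sum>P\<in>V. D P * int (dg P))"
        using finV nnU[OF D] r unfolding V_def by (intro sum_mono2) auto
      also have "\<dots> = dgs dg D" by (rule dgs_superset[symmetric, OF finV suppV[OF D]])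
      finally have "int r * int (size (ms D r)) \<le> int N" using csum[OF D r] n \<open>dgs dg D = int n\<close>
        by linarith
      hence "size (ms D r) * r \<le> N" by (simp add: mult.commute flip: of_nat_mult)
      hence "size (ms D r) \<le> N div r" using r by (simp add: R_def less_eq_div_iff_mult_less_eq)
      with s1 have "ms D r \<in> {M. set_mset M \<subseteq> Cl pl dg r \<and> size M \<le> N div r}" by simp }
    thus "psi D \<in> Dom" by (auto simp: Dom_def psi_def)
  qed
  have wpsi: "\<And>D. D \<in> U \<Longrightarrow> x ^ nat (dgs dg D) = w (psi D)"
  proof -
    fix D assume D: "D \<in> U"
    have "nat (dgs dg D) = (\<Sum>r\<in>R. r * size (ms D r))" unfolding degU[OF D]
      by (simp flip: of_nat_mult of_nat_sum)
    thus "?thesis D" by (simp add: w_def psi_def power_sum)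
  qed
  have inj: "inj_on psi U"
  proof (rule inj_onI)
    fix D1 D2 assume D1: "D1 \<in> U" and D2: "D2 \<in> U" and eq: "psi D1 = psi D2"
    have cnt: "\<And>D P. P \<in> Cl pl dg (dg P) \<Longrightarrow> dg P \<in> R \<Longrightarrow>
        count (ms D (dg P)) P = nat (D P)"
      using finC by (auto simp: ms_def count_sum sum.delta)
    show "D1 = D2"
    proof
      fix P
      show "D1 P = D2 P"
      proof (cases "D1 P = 0 \<and> D2 P = 0")
        case True thus ?thesis by simp
      next
        case False
        hence g: "dg P \<in> R \<and> P \<in> Cl pl dg (dg P)" using goodU D1 D2 by blast
        have "psi D1 (dg P) = psi D2 (dg P)" using eq by simp
        hence "ms D1 (dg P) = ms D2 (dg P)" using g by (simp add: psi_def)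
        hence "nat (D1 P) = nat (D2 P)" using cnt g by metis
        thus ?thesis using nnU D1 D2 by (metis int_nat_eq)
      qed
    qed
  qed
  have finDom: "finite Dom" unfolding Dom_def using finR finC
    by (intro finite_PiE) (auto intro: finite_msets_le(2))
  have "(\<Sum>n=0..N. real (card (Sd pl dg n)) * x ^ n) = (\<Sum>n=0..N. real (card (T n)) * x ^ n)"
    by (intro sum.cong) (auto simp: T_def)
  also have "\<dots> = (\<Sum>n\<in>{0..N}. \<Sum>D\<in>T n. x ^ nat (dgs dg D))"
    by (intro sum.cong refl) (auto simp: T_def Sd_def)
  also have "\<dots> = (\<Sum>D\<in>U. x ^ nat (dgs dg D))"
    unfolding U_def using finT
    by (intro sum.UNION_disjoint[symmetric]) (auto simp: T_def Sd_def split: if_splits)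
  also have "\<dots> = (\<Sum>D\<in>U. w (psi D))" using wpsi by simp
  also have "\<dots> = (\<Sum>M\<in>psi ` U. w M)" using inj by (simp add: sum.reindex)
  also have "\<dots> \<le> (\<Sum>M\<in>Dom. w M)"
    using finDom psiDom x0 by (intro sum_mono2) (auto simp: w_def intro!: prod_nonneg)
  also have "\<dots> = (\<Prod>r\<in>R. \<Sum>M\<in>{M. set_mset M \<subseteq> Cl pl dg r \<and> size M \<le> N div r}. x ^ (r * size M))"
    unfolding Dom_def w_def using finR finC
    by (intro prod_sum_PiE[symmetric]) (auto intro: finite_msets_le(2))
  also have "\<dots> = (\<Prod>r\<in>R. \<Sum>b=0..N div r. x ^ (r * b) * real ((card (Cl pl dg r) + b - 1) choose b))"
    using finC by (intro prod.cong refl factor_eq) auto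
  finally show ?thesis unfolding R_def .
qed

theorem theorem3p9:
  fixes K :: "'a::field set" and q g :: nat
  assumes "function_field K" and "full_constant_field K"
    and "finite K" and "card K = q"
    and "genus K = int g" and "g \<ge> 2"
  shows "real q ^ (g - 1) * (\<Sum>n = 0..g - 2. real (num_eff_divs K n) / real q ^ n)
     \<le> real q ^ (g - 1) *
       (\<Prod>r\<in>{r. 1 \<le> r \<and> r \<le> g - 2 \<and> num_places K r \<ge> 1}.
          (\<Sum>b = 0..(g - 2) div r.
             1 / real q ^ (r * b) * real ((num_places K r + b - 1) choose b)))"
proof -
  have "0 \<in> K" using assms(1) by (simp add: function_field_def subfield_def)
  hence qpos: "q > 0" using assms(3,4) card_gt_0_iff by blast
  define x where "x = 1 / real q"
  have x0: "0 \<le> x" by (simp add: x_def)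
  have A: "\<And>n. num_eff_divs K n = card (Sd (place K) (place_deg K) n)"
    unfolding num_eff_divs_def Sd_def divisor_def effective_def div_deg_def dgs_def
    by (rule arg_cong[where f=card]) auto
  have B: "\<And>r. num_places K r = card (Cl (place K) (place_deg K) r)"
    unfolding num_places_def Cl_def by simp
  have L: "(\<Sum>n = 0..g - 2. real (num_eff_divs K n) / real q ^ n)
      = (\<Sum>n = 0..g - 2. real (card (Sd (place K) (place_deg K) n)) * x ^ n)"
    by (simp add: A x_def power_one_over divide_inverse power_inverse)
  have Rr: "(\<Prod>r\<in>{r. 1 \<le> r \<and> r \<le> g - 2 \<and> num_places K r \<ge> 1}.
          (\<Sum>b = 0..(g - 2) div r.
             1 / real q ^ (r * b) * real ((num_places K r + b - 1) choose b)))
     = (\<Prod>r\<in>{r. 1 \<le> r \<and> r \<le> g - 2 \<and> card (Cl (place K) (place_deg K) r) \<ge> 1}.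
          (\<Sum>b=0..(g - 2) div r. x ^ (r * b) * real ((card (Cl (place K) (place_deg K) r) + b - 1) choose b)))"
    by (simp add: B x_def power_one_over)
  show ?thesis unfolding L Rr
    by (intro mult_left_mono main_ineq x0) simp
qed

end
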